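(* Let $n\ge2$, $r\ge1$, let $V_1,\dots,V_r\in\mathrm{Mat}(n,\mathbb{C})$ satisfy $\operatorname{tr}(V_s^*V_m)=\delta_{sm}$, and define $$P_{\mathcal T}=\sum_{s=1}^r\sum_{a,b,c,d=1}^n (V_s)_{ab}(\bar V_s)_{cd}\,E^{(n)}_{ac}\otimes E^{(n)}_{bd},\qquad A_{\mathcal T}=\sum_{s,m=1}^r E^{(r)}_{sm}\otimes\Big(\sum_{i=1}^r V_i\bar V_sV_m^tV_i^*\Big).$$ For $A\in\mathrm{Mat}(rn,\mathbb{C})$ and a positive integer $k$ let $$G[A;k]=\big(k-rn+\operatorname{tr}A\big)^2-k\big(k-rn+\operatorname{tr}A^2\big).$$ If, for some real $Q>0$, $P_{\mathcal T}$ is a solution of $P^*=P$, $P^2=P$, $Q^2(P_1P_2P_1-P_2P_1P_2)=P_1-P_2$ (with $P_1=P_{\mathcal T}\otimes I_n$, $P_2=I_n\otimes P_{\mathcal T}$), then there exists a positive integer $k$ such that $G[A_{\mathcal T};k]=0$.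
   Context: $E^{(p)}_{ab}\in\mathrm{Mat}(p,\mathbb{C})$ is the matrix unit with $(E^{(p)}_{ab})_{ij}=\delta_{ai}\delta_{bj}$; $\bar V$ is entrywise complex conjugate, $V^t$ transpose, $V^*$ conjugate transpose; $\otimes$ is the Kronecker product. *)

theory Defs
  imports Complex_Main "Jordan_Normal_Form.Matrix"
begin

definition cmat_conj :: "complex mat \<Rightarrow> complex mat" where
  "cmat_conj A = mat (dim_row A) (dim_col A) (\<lambda>(i,j). cnj (A $$ (i,j)))"

definition cmat_adj :: "complex mat \<Rightarrow> complex mat" where
  "cmat_adj A = transpose_mat (cmat_conj A)"

definition mtrace :: "complex mat \<Rightarrow> complex" where
  "mtrace A = (\<Sum>i<dim_row A. A $$ (i,i))"

definition kron :: "complex mat \<Rightarrow> complex mat \<Rightarrow> complex mat" where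
  "kron A B = mat (dim_row A * dim_row B) (dim_col A * dim_col B)
     (\<lambda>(i,j). A $$ (i div dim_row B, j div dim_col B) * B $$ (i mod dim_row B, j mod dim_col B))"

(* matrix unit E^{(p)}_{ab} (0-based indices a,b < p) *)
definition matunit :: "nat \<Rightarrow> nat \<Rightarrow> nat \<Rightarrow> complex mat" where
  "matunit p a b = mat p p (\<lambda>(i,j). if i = a \<and> j = b then 1 else 0)"

definition msum :: "nat \<Rightarrow> nat \<Rightarrow> ('i \<Rightarrow> complex mat) \<Rightarrow> 'i set \<Rightarrow> complex mat" where
  "msum k l f I = mat k l (\<lambda>ij. \<Sum>x\<in>I. f x $$ ij)"

definition P_T :: "nat \<Rightarrow> nat \<Rightarrow> (nat \<Rightarrow> complex mat) \<Rightarrow> complex mat" where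
  "P_T n r V = msum (n*n) (n*n)
     (\<lambda>(s,a,b,c,d). ((V s $$ (a,b)) * cmat_conj (V s) $$ (c,d)) \<cdot>\<^sub>m kron (matunit n a c) (matunit n b d))
     ({0..<r} \<times> {0..<n} \<times> {0..<n} \<times> {0..<n} \<times> {0..<n})"

definition A_T :: "nat \<Rightarrow> nat \<Rightarrow> (nat \<Rightarrow> complex mat) \<Rightarrow> complex mat" where
  "A_T n r V = msum (r*n) (r*n)
     (\<lambda>(s,m). kron (matunit r s m)
        (msum n n (\<lambda>i. V i * cmat_conj (V s) * transpose_mat (V m) * cmat_adj (V i)) {0..<r}))
     ({0..<r} \<times> {0..<r})"

definition G :: "nat \<Rightarrow> nat \<Rightarrow> complex mat \<Rightarrow> nat \<Rightarrow> complex" where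
  "G n r A k = (of_nat k - of_nat (r*n) + mtrace A)^2
              - of_nat k * (of_nat k - of_nat (r*n) + mtrace (A * A))"

end

theory Submission
  imports Defs "Jordan_Normal_Form.Schur_Decomposition"
begin
lemma matunit_idx: "i < p \<Longrightarrow> j < p \<Longrightarrow> matunit p a b $$ (i,j) = (if i = a \<and> j = b then 1 else 0)"
  by (simp add: matunit_def)

lemma matunit_dim[simp]: "dim_row (matunit p a b) = p" "dim_col (matunit p a b) = p" by (simp_all add: matunit_def)

lemma kron_idx: "i < dim_row A * dim_row B \<Longrightarrow> j < dim_col A * dim_col B \<Longrightarrow>
  kron A B $$ (i,j) = A $$ (i div dim_row B, j div dim_col B) * B $$ (i mod dim_row B, j mod dim_col B)"
  by (simp add: kron_def)

lemma kron_dim[simp]: "dim_row (kron A B) = dim_row A * dim_row B" "dim_col (kron A B) = dim_col A * dim_col B"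
  by (simp_all add: kron_def)

lemma div_lt_sq: "i < n*n \<Longrightarrow> i div n < (n::nat)"
  by (simp add: less_mult_imp_div_less)

lemma sum_delta_conj: assumes "finite A" shows "(\<Sum>x\<in>A. if x = a \<and> P x then f x else 0) = (if a \<in> A \<and> P a then f a else 0)"
proof -
  have "(\<Sum>x\<in>A. if x = a \<and> P x then f x else 0) = (\<Sum>x\<in>A. if x = a then (if P a then f a else 0) else 0)"
    by (rule sum.cong) auto
  thus ?thesis using assms by (simp add: sum.delta)
qed

lemma P_T_idx: assumes "i < n*n" "j < n*n" and V: "\<forall>s<r. V s \<in> carrier_mat n n"
  shows "P_T n r V $$ (i,j) = (\<Sum>s<r. V s $$ (i div n, i mod n) * cnj (V s $$ (j div n, j mod n)))"
proof -
  have n: "n > 0" using assms by (cases n) auto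
  have d: "i div n < n" "j div n < n" using assms div_lt_sq by auto
  have "P_T n r V $$ (i,j) = (\<Sum>x\<in>{0..<r} \<times> ({0..<n} \<times> {0..<n} \<times> {0..<n} \<times> {0..<n}).
     (case x of (s,y) \<Rightarrow> if y = (i div n, i mod n, j div n, j mod n) then
        V s $$ (i div n, i mod n) * cnj (V s $$ (j div n, j mod n)) else 0))"
    unfolding P_T_def msum_def using assms n d
    by (auto intro!: sum.cong simp: kron_idx matunit_idx cmat_conj_def matunit_def)
  also have "\<dots> = (\<Sum>s<r. V s $$ (i div n, i mod n) * cnj (V s $$ (j div n, j mod n)))"
    using assms n d
    by (subst sum.cartesian_product', simp only: case_prod_conv, simp add: sum.delta lessThan_atLeast0)
  finally show ?thesis .
qed
lemma sum_split_mult: "(\<Sum>i<a*b. f i) = (\<Sum>x<a. \<Sum>y<b. f (x*b+y))" for f :: "nat \<Rightarrow> 'a::comm_monoid_add"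
proof (induction a)
  case 0 then show ?case by simp
next
  case (Suc a)
  have "{..<Suc a * b} = {..<a*b} \<union> {a*b..<a*b+b}" by auto
  hence "(\<Sum>i<Suc a*b. f i) = (\<Sum>i<a*b. f i) + (\<Sum>i\<in>{a*b..<a*b+b}. f i)"
    by (simp add: sum.union_disjoint ivl_disj_int)
  also have "(\<Sum>i\<in>{a*b..<a*b+b}. f i) = (\<Sum>y<b. f (a*b+y))"
    using sum.shift_bounds_nat_ivl[of f 0 "a*b" b] by (simp add: lessThan_atLeast0 add.commute)
  finally show ?case using Suc by simp
qed

lemma sum_split3: "(\<Sum>i<n*n*n. f i) = (\<Sum>x<n. \<Sum>a<n. \<Sum>b<n. f ((x*n+a)*n+b))" for f :: "nat \<Rightarrow> 'a::comm_monoid_add"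
  by (simp add: sum_split_mult[of _ "n*n" n] sum_split_mult[of _ n n])

lemma idx3: assumes "a < n" "b < (n::nat)"
  shows "((x*n+a)*n+b) div n = x*n+a" "((x*n+a)*n+b) mod n = b"
    "((x*n+a)*n+b) div (n*n) = x" "((x*n+a)*n+b) mod (n*n) = a*n+b"
    "(a*n+b) div n = a" "(a*n+b) mod n = b" "(x*n+a) div n = x" "(x*n+a) mod n = a"
proof -
  have n: "n > 0" using assms by auto
  show 1: "((x*n+a)*n+b) div n = x*n+a" "((x*n+a)*n+b) mod n = b" using assms by auto
  show 2: "(a*n+b) div n = a" "(a*n+b) mod n = b" "(x*n+a) div n = x" "(x*n+a) mod n = a" using assms by auto
  show "((x*n+a)*n+b) div (n*n) = x" using 1 2 by (simp add: div_mult2_eq)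
  show "((x*n+a)*n+b) mod (n*n) = a*n+b"
    by (metis 1(1) 1(2) 2(4) add.commute mod_mult2_eq mult.commute)
qed

lemma ite_mult: "(if P then a else 0) * b = (if P then a * b else (0::'a::mult_zero))"
  "b * (if P then a else 0) = (if P then b * a else (0::'a::mult_zero))" by auto

lemma mult_idx: "i < dim_row A \<Longrightarrow> j < dim_col B \<Longrightarrow> dim_col A = m \<Longrightarrow> dim_row B = m \<Longrightarrow>
  (A * B) $$ (i,j) = (\<Sum>k<m. A $$ (i,k) * B $$ (k,j))"
  by (simp add: scalar_prod_def lessThan_atLeast0)

lemma lin_bound: "u < m \<Longrightarrow> b < n \<Longrightarrow> u*n+b < m*(n::nat)"
proof -
  assume "u < m" "b < n"
  hence "u*n+b < (u+1)*n" by simp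
  also have "\<dots> \<le> m*n" using \<open>u < m\<close> by (intro mult_right_mono) auto
  finally show ?thesis .
qed

definition Wm :: "nat \<Rightarrow> nat \<Rightarrow> (nat \<Rightarrow> complex mat) \<Rightarrow> complex mat" where
  "Wm n r V = mat (n*n*n) (r*n) (\<lambda>(i,p). if i div (n*n) = p mod n then
      V (p div n) $$ (i mod (n*n) div n, i mod (n*n) mod n) else 0)"

definition Wa :: "nat \<Rightarrow> nat \<Rightarrow> (nat \<Rightarrow> complex mat) \<Rightarrow> complex mat" where
  "Wa n r V = mat (r*n) (n*n*n) (\<lambda>(p,i). if i div (n*n) = p mod n then
      cnj (V (p div n) $$ (i mod (n*n) div n, i mod (n*n) mod n)) else 0)"

lemma Wm_dim[simp]: "dim_row (Wm n r V) = n*n*n" "dim_col (Wm n r V) = r*n" by (simp_all add: Wm_def)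
lemma Wa_dim[simp]: "dim_row (Wa n r V) = r*n" "dim_col (Wa n r V) = n*n*n" by (simp_all add: Wa_def)

lemma Wm_idx3: "x < n \<Longrightarrow> a < n \<Longrightarrow> b < n \<Longrightarrow> p < r*n \<Longrightarrow>
  Wm n r V $$ ((x*n+a)*n+b, p) = (if x = p mod n then V (p div n) $$ (a,b) else 0)"
proof -
  assume as: "x < n" "a < n" "b < n" "p < r*n"
  have "(x*n+a)*n+b < n*n*n" using as by (intro lin_bound) auto
  thus ?thesis using as by (simp add: Wm_def idx3)
qed

lemma Wa_idx3: "x < n \<Longrightarrow> a < n \<Longrightarrow> b < n \<Longrightarrow> p < r*n \<Longrightarrow>
  Wa n r V $$ (p, (x*n+a)*n+b) = (if x = p mod n then cnj (V (p div n) $$ (a,b)) else 0)"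
proof -
  assume as: "x < n" "a < n" "b < n" "p < r*n"
  have "(x*n+a)*n+b < n*n*n" using as by (intro lin_bound) auto
  thus ?thesis using as by (simp add: Wa_def idx3)
qed

lemma F1: assumes V: "\<forall>s<r. V s \<in> carrier_mat n n"
  and ortho: "\<forall>s<r. \<forall>m<r. mtrace (cmat_adj (V s) * V m) = (if s = m then 1 else 0)"
  and n: "n > 0"
  shows "Wa n r V * Wm n r V = 1\<^sub>m (r*n)"
proof (rule eq_matI)
  fix p q assume p: "p < dim_row (1\<^sub>m (r*n))" and q: "q < dim_col (1\<^sub>m (r*n))"
  hence pq: "p < r*n" "q < r*n" by auto
  have ds: "p div n < r" "q div n < r" "p mod n < n" "q mod n < n" using pq n
    by (auto simp: less_mult_imp_div_less mult.commute)
  have cV: "V (p div n) \<in> carrier_mat n n" "V (q div n) \<in> carrier_mat n n" using V ds by auto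
  have "(Wa n r V * Wm n r V) $$ (p,q) = (\<Sum>k<n*n*n. Wa n r V $$ (p,k) * Wm n r V $$ (k,q))"
    using pq by (intro mult_idx) auto
  also have "\<dots> = (\<Sum>x<n. \<Sum>a<n. \<Sum>b<n. (if x = p mod n then cnj (V (p div n) $$ (a,b)) else 0) *
      (if x = q mod n then V (q div n) $$ (a,b) else 0))"
    unfolding sum_split3 using pq by (simp add: Wa_idx3 Wm_idx3)
  also have "\<dots> = (if p mod n = q mod n then (\<Sum>a<n. \<Sum>b<n. cnj (V (p div n) $$ (a,b)) * V (q div n) $$ (a,b)) else 0)"
  proof -
    have "\<And>x. (\<Sum>a<n. \<Sum>b<n. (if x = p mod n then cnj (V (p div n) $$ (a,b)) else 0) *
      (if x = q mod n then V (q div n) $$ (a,b) else 0)) = (if x = p mod n then (if x = q mod n then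
       (\<Sum>a<n. \<Sum>b<n. cnj (V (p div n) $$ (a,b)) * V (q div n) $$ (a,b)) else 0) else 0)" by auto
    thus ?thesis using ds by simp
  qed
  also have "(\<Sum>a<n. \<Sum>b<n. cnj (V (p div n) $$ (a,b)) * V (q div n) $$ (a,b)) = mtrace (cmat_adj (V (p div n)) * V (q div n))"
  proof -
    have "mtrace (cmat_adj (V (p div n)) * V (q div n)) = (\<Sum>b<n. \<Sum>a<n. cnj (V (p div n) $$ (a,b)) * V (q div n) $$ (a,b))"
      unfolding mtrace_def using cV ds
      by (intro sum.cong) (auto simp: cmat_adj_def cmat_conj_def scalar_prod_def lessThan_atLeast0 intro!: sum.cong)
    thus ?thesis by (subst sum.swap) simp
  qed
  also have "\<dots> = (if p div n = q div n then 1 else 0)" using ortho ds by simp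
  finally have "(Wa n r V * Wm n r V) $$ (p,q) = (if p mod n = q mod n then (if p div n = q div n then 1 else 0) else 0)" .
  note E = this
  show "(Wa n r V * Wm n r V) $$ (p,q) = 1\<^sub>m (r*n) $$ (p,q)"
  proof -
    have "p = q \<longleftrightarrow> p div n = q div n \<and> p mod n = q mod n" by (metis div_mult_mod_eq)
    thus ?thesis using E pq by auto
  qed
qed auto

lemma P_T_dim[simp]: "dim_row (P_T n r V) = n*n" "dim_col (P_T n r V) = n*n"
  by (simp_all add: P_T_def msum_def)

lemma A_T_dim[simp]: "dim_row (A_T n r V) = r*n" "dim_col (A_T n r V) = r*n"
  by (simp_all add: A_T_def msum_def)

lemma F2: assumes V: "\<forall>s<r. V s \<in> carrier_mat n n" and n: "n > 0"
  shows "Wm n r V * Wa n r V = kron (1\<^sub>m n) (P_T n r V)"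
proof (rule eq_matI)
  fix i j assume i: "i < dim_row (kron (1\<^sub>m n) (P_T n r V))" and j: "j < dim_col (kron (1\<^sub>m n) (P_T n r V))"
  hence ij: "i < n*n*n" "j < n*n*n" by (auto simp: ac_simps)
  have dd: "i div (n*n) < n" "j div (n*n) < n" "i mod (n*n) < n*n" "j mod (n*n) < n*n"
    using ij n by (auto simp: less_mult_imp_div_less)
  have "(Wm n r V * Wa n r V) $$ (i,j) = (\<Sum>p<r*n. Wm n r V $$ (i,p) * Wa n r V $$ (p,j))"
    using ij by (intro mult_idx) auto
  also have "\<dots> = (\<Sum>s<r. \<Sum>x<n. (if i div (n*n) = x then V s $$ (i mod (n*n) div n, i mod (n*n) mod n) else 0) *
      (if j div (n*n) = x then cnj (V s $$ (j mod (n*n) div n, j mod (n*n) mod n)) else 0))"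
    unfolding sum_split_mult using ij by (intro sum.cong refl) (auto simp: Wm_def Wa_def lin_bound)
  also have "\<dots> = (\<Sum>s<r. if i div (n*n) = j div (n*n) then V s $$ (i mod (n*n) div n, i mod (n*n) mod n) *
      cnj (V s $$ (j mod (n*n) div n, j mod (n*n) mod n)) else 0)"
  proof (intro sum.cong refl)
    fix s
    have "\<And>x. (if i div (n*n) = x then V s $$ (i mod (n*n) div n, i mod (n*n) mod n) else 0) *
      (if j div (n*n) = x then cnj (V s $$ (j mod (n*n) div n, j mod (n*n) mod n)) else 0) =
      (if x = i div (n*n) then (if i div (n*n) = j div (n*n) then V s $$ (i mod (n*n) div n, i mod (n*n) mod n) *
      cnj (V s $$ (j mod (n*n) div n, j mod (n*n) mod n)) else 0) else 0)" by auto
    thus "(\<Sum>x<n. (if i div (n*n) = x then V s $$ (i mod (n*n) div n, i mod (n*n) mod n) else 0) *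
      (if j div (n*n) = x then cnj (V s $$ (j mod (n*n) div n, j mod (n*n) mod n)) else 0)) =
      (if i div (n*n) = j div (n*n) then V s $$ (i mod (n*n) div n, i mod (n*n) mod n) *
      cnj (V s $$ (j mod (n*n) div n, j mod (n*n) mod n)) else 0)" using dd by simp
  qed
  also have "\<dots> = kron (1\<^sub>m n) (P_T n r V) $$ (i,j)"
    using ij dd V by (simp add: kron_idx P_T_idx ac_simps)
  finally show "(Wm n r V * Wa n r V) $$ (i,j) = kron (1\<^sub>m n) (P_T n r V) $$ (i,j)" .
qed (auto simp: ac_simps)

lemma prod4_idx: fixes X C T D :: "complex mat" assumes "X \<in> carrier_mat n n" "C \<in> carrier_mat n n" "T \<in> carrier_mat n n" "D \<in> carrier_mat n n"
  "x < n" "y < n"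
  shows "(X * C * T * D) $$ (x,y) = (\<Sum>c<n. \<Sum>a<n. \<Sum>b<n. X $$ (x,a) * C $$ (a,b) * T $$ (b,c) * D $$ (c,y))"
  using assms by (simp add: mult_idx[where m=n] scalar_prod_def lessThan_atLeast0 sum_distrib_right sum_distrib_left mult.assoc)

lemma msum_dim[simp]: "dim_row (msum k l f I) = k" "dim_col (msum k l f I) = l" by (simp_all add: msum_def)

lemma A_T_idx: assumes "p < r*n" "q < r*n"
  shows "A_T n r V $$ (p,q) = (\<Sum>i<r. (V i * cmat_conj (V (p div n)) * transpose_mat (V (q div n)) * cmat_adj (V i)) $$ (p mod n, q mod n))"
proof -
  have n: "n > 0" using assms by (cases n) auto
  have d: "p div n < r" "q div n < r" "p mod n < n" "q mod n < n" using assms n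
    by (auto simp: less_mult_imp_div_less mult.commute)
  let ?B = "\<lambda>s m. msum n n (\<lambda>i. V i * cmat_conj (V s) * transpose_mat (V m) * cmat_adj (V i)) {0..<r}"
  have "A_T n r V $$ (p,q) = (\<Sum>x\<in>{0..<r} \<times> {0..<r}. (case x of (s,m) \<Rightarrow> kron (matunit r s m) (?B s m)) $$ (p,q))"
    unfolding A_T_def msum_def[of "r*n" "r*n"] using assms by simp
  also have "\<dots> = (\<Sum>x\<in>{0..<r} \<times> {0..<r}. if x = (p div n, q div n) then
     (case x of (s,m) \<Rightarrow> ?B s m $$ (p mod n, q mod n)) else 0)"
    using assms n d
    by (intro sum.cong refl) (auto simp: kron_idx matunit_idx msum_dim split: if_splits)
  also have "\<dots> = ?B (p div n) (q div n) $$ (p mod n, q mod n)" using d by simp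
  also have "\<dots> = (\<Sum>i<r. (V i * cmat_conj (V (p div n)) * transpose_mat (V (q div n)) * cmat_adj (V i)) $$ (p mod n, q mod n))"
    using d by (simp add: msum_def lessThan_atLeast0)
  finally show ?thesis .
qed

lemma WaP1_idx: assumes V: "\<forall>s<r. V s \<in> carrier_mat n n" and n: "n > 0" and p: "p < r*n" and j: "j < n*n*n"
  shows "(Wa n r V * kron (P_T n r V) (1\<^sub>m n)) $$ (p,j) =
    (\<Sum>a<n. cnj (V (p div n) $$ (a, j mod n)) * P_T n r V $$ ((p mod n)*n + a, j div n))"
proof -
  have dj: "j div n < n*n" "j mod n < n" using j n by (auto simp: less_mult_imp_div_less)
  have dp: "p mod n < n" using n by auto
  have "(Wa n r V * kron (P_T n r V) (1\<^sub>m n)) $$ (p,j) = (\<Sum>k<n*n*n. Wa n r V $$ (p,k) * kron (P_T n r V) (1\<^sub>m n) $$ (k,j))"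
    using p j by (intro mult_idx) auto
  also have "\<dots> = (\<Sum>x<n. \<Sum>a<n. \<Sum>b<n. (if x = p mod n then cnj (V (p div n) $$ (a,b)) else 0) *
      (P_T n r V $$ (x*n+a, j div n) * (if b = j mod n then 1 else 0)))"
    unfolding sum_split3 using p j dj
    by (intro sum.cong refl) (auto simp: Wa_idx3 kron_idx idx3 lin_bound)
  also have "\<dots> = (\<Sum>x<n. if x = p mod n then (\<Sum>a<n. cnj (V (p div n) $$ (a, j mod n)) * P_T n r V $$ (x*n + a, j div n)) else 0)"
  proof (intro sum.cong refl)
    fix x
    show "(\<Sum>a<n. \<Sum>b<n. (if x = p mod n then cnj (V (p div n) $$ (a,b)) else 0) *
      (P_T n r V $$ (x*n+a, j div n) * (if b = j mod n then 1 else 0))) =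
      (if x = p mod n then (\<Sum>a<n. cnj (V (p div n) $$ (a, j mod n)) * P_T n r V $$ (x*n + a, j div n)) else 0)"
      using dj by (cases "x = p mod n") (simp_all add: ite_mult sum.delta)
  qed
  also have "\<dots> = (\<Sum>a<n. cnj (V (p div n) $$ (a, j mod n)) * P_T n r V $$ ((p mod n)*n + a, j div n))"
    using dp by (simp add: sum.delta)
  finally show ?thesis .
qed

lemma ent_n: assumes "M \<in> carrier_mat n n" "a < n" "b < n"
  shows "cmat_conj M $$ (a,b) = cnj (M $$ (a,b))" "transpose_mat M $$ (a,b) = M $$ (b,a)"
    "cmat_adj M $$ (a,b) = cnj (M $$ (b,a))"
  using assms by (auto simp: cmat_adj_def cmat_conj_def)

lemma F3: assumes V: "\<forall>s<r. V s \<in> carrier_mat n n" and n: "n > 0"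
  shows "Wa n r V * kron (P_T n r V) (1\<^sub>m n) * Wm n r V = A_T n r V"
proof (rule eq_matI)
  fix p q assume p: "p < dim_row (A_T n r V)" and q: "q < dim_col (A_T n r V)"
  hence pq: "p < r*n" "q < r*n" by auto
  have ds: "p div n < r" "q div n < r" "p mod n < n" "q mod n < n" using pq n
    by (auto simp: less_mult_imp_div_less mult.commute)
  have cV: "V (p div n) \<in> carrier_mat n n" "V (q div n) \<in> carrier_mat n n" using V ds by auto
  let ?s = "p div n" and ?t = "q div n" and ?x = "p mod n" and ?y = "q mod n"
  let ?M = "Wa n r V * kron (P_T n r V) (1\<^sub>m n)"
  have "(?M * Wm n r V) $$ (p,q) = (\<Sum>k<n*n*n. ?M $$ (p,k) * Wm n r V $$ (k,q))"
    using pq by (intro mult_idx) auto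
  also have "\<dots> = (\<Sum>y'<n. \<Sum>c<n. \<Sum>d<n. ?M $$ (p, (y'*n+c)*n+d) * (if y' = ?y then V ?t $$ (c,d) else 0))"
    unfolding sum_split3 using pq by (intro sum.cong refl) (auto simp: Wm_idx3)
  also have "\<dots> = (\<Sum>y'<n. if y' = ?y then (\<Sum>c<n. \<Sum>d<n. ?M $$ (p, (y'*n+c)*n+d) * V ?t $$ (c,d)) else 0)"
    by (intro sum.cong refl) auto
  also have "\<dots> = (\<Sum>c<n. \<Sum>d<n. ?M $$ (p, (?y*n+c)*n+d) * V ?t $$ (c,d))"
    using ds by (simp add: sum.delta)
  also have "\<dots> = (\<Sum>c<n. \<Sum>d<n. (\<Sum>a<n. cnj (V ?s $$ (a, d)) * (\<Sum>m<r. V m $$ (?x, a) * cnj (V m $$ (?y, c)))) * V ?t $$ (c,d))"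
  proof (intro sum.cong refl)
    fix c d assume c: "c \<in> {..<n}" and d: "d \<in> {..<n}"
    have b: "(?y*n+c)*n+d < n*n*n" using c d ds by (intro lin_bound) auto
    have "?M $$ (p, (?y*n+c)*n+d) = (\<Sum>a<n. cnj (V ?s $$ (a, d)) * P_T n r V $$ (?x*n + a, ?y*n+c))"
      using WaP1_idx[OF V n pq(1) b] c d ds by (simp add: idx3)
    also have "\<dots> = (\<Sum>a<n. cnj (V ?s $$ (a, d)) * (\<Sum>m<r. V m $$ (?x, a) * cnj (V m $$ (?y, c))))"
    proof (intro sum.cong refl)
      fix a assume a: "a \<in> {..<n}"
      have "?x*n+a < n*n" "?y*n+c < n*n" using a c ds by (auto intro!: lin_bound)
      thus "cnj (V ?s $$ (a, d)) * P_T n r V $$ (?x*n + a, ?y*n+c) = cnj (V ?s $$ (a, d)) * (\<Sum>m<r. V m $$ (?x, a) * cnj (V m $$ (?y, c)))"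
        using a c ds V by (simp add: P_T_idx idx3)
    qed
    finally show "?M $$ (p, (?y*n+c)*n+d) * V ?t $$ (c,d) = (\<Sum>a<n. cnj (V ?s $$ (a, d)) * (\<Sum>m<r. V m $$ (?x, a) * cnj (V m $$ (?y, c)))) * V ?t $$ (c,d)"
      by simp
  qed
  also have "\<dots> = (\<Sum>c<n. \<Sum>d<n. \<Sum>a<n. \<Sum>m<r. cnj (V ?s $$ (a, d)) * V m $$ (?x, a) * cnj (V m $$ (?y, c)) * V ?t $$ (c,d))"
    by (simp add: sum_distrib_left sum_distrib_right mult.assoc)
  also have "\<dots> = (\<Sum>c<n. \<Sum>a<n. \<Sum>d<n. \<Sum>m<r. cnj (V ?s $$ (a, d)) * V m $$ (?x, a) * cnj (V m $$ (?y, c)) * V ?t $$ (c,d))"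
    by (rule sum.cong[OF refl], rule sum.swap)
  also have "\<dots> = (\<Sum>i<r. \<Sum>c<n. \<Sum>a<n. \<Sum>b<n. V i $$ (?x,a) * cmat_conj (V ?s) $$ (a,b) * transpose_mat (V ?t) $$ (b,c) * cmat_adj (V i) $$ (c,?y))"
  proof -
    have "(\<Sum>i<r. \<Sum>c<n. \<Sum>a<n. \<Sum>b<n. V i $$ (?x,a) * cmat_conj (V ?s) $$ (a,b) * transpose_mat (V ?t) $$ (b,c) * cmat_adj (V i) $$ (c,?y))
       = (\<Sum>i<r. \<Sum>c<n. \<Sum>a<n. \<Sum>b<n. V i $$ (?x,a) * cnj (V ?s $$ (a,b)) * V ?t $$ (c,b) * cnj (V i $$ (?y,c)))"
    proof (intro sum.cong refl)
      fix i c a b assume i: "i \<in> {..<r}" and c: "c \<in> {..<n}" and a: "a \<in> {..<n}" and b: "b \<in> {..<n}"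
      have "V i \<in> carrier_mat n n" using V i by auto
      thus "V i $$ (?x,a) * cmat_conj (V ?s) $$ (a,b) * transpose_mat (V ?t) $$ (b,c) * cmat_adj (V i) $$ (c,?y) =
        V i $$ (?x,a) * cnj (V ?s $$ (a,b)) * V ?t $$ (c,b) * cnj (V i $$ (?y,c))"
        using cV a b c ds by (simp add: ent_n)
    qed
    also have "\<dots> = (\<Sum>c<n. \<Sum>a<n. \<Sum>b<n. \<Sum>i<r. V i $$ (?x,a) * cnj (V ?s $$ (a,b)) * V ?t $$ (c,b) * cnj (V i $$ (?y,c)))"
      by (simp add: sum.swap[of _ "{..<r}" "{..<n}"])
    finally show ?thesis by (simp add: ac_simps)
  qed
  also have "\<dots> = A_T n r V $$ (p,q)"
  proof -
    have "(\<Sum>i<r. \<Sum>c<n. \<Sum>a<n. \<Sum>b<n. V i $$ (?x,a) * cmat_conj (V ?s) $$ (a,b) * transpose_mat (V ?t) $$ (b,c) * cmat_adj (V i) $$ (c,?y))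
      = (\<Sum>i<r. (V i * cmat_conj (V ?s) * transpose_mat (V ?t) * cmat_adj (V i)) $$ (?x, ?y))"
    proof (intro sum.cong refl)
      fix i assume i: "i \<in> {..<r}"
      have "V i \<in> carrier_mat n n" using V i by auto
      thus "(\<Sum>c<n. \<Sum>a<n. \<Sum>b<n. V i $$ (?x,a) * cmat_conj (V ?s) $$ (a,b) * transpose_mat (V ?t) $$ (b,c) * cmat_adj (V i) $$ (c,?y))
        = (V i * cmat_conj (V ?s) * transpose_mat (V ?t) * cmat_adj (V i)) $$ (?x, ?y)"
        using cV ds by (subst prod4_idx[where n=n]) (auto simp: cmat_adj_def cmat_conj_def)
    qed
    thus ?thesis using pq by (simp add: A_T_idx)
  qed
  finally show "(?M * Wm n r V) $$ (p,q) = A_T n r V $$ (p,q)" .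
qed auto

lemma assoc': "dim_col X = dim_row Y \<Longrightarrow> dim_col Y = dim_row Z \<Longrightarrow> X*Y*Z = X*(Y*(Z::'a::semiring_0 mat))"
  by (rule assoc_mult_mat[of X "dim_row X" "dim_col X" Y "dim_col Y" Z "dim_col Z"]) auto

lemma dist1: fixes X Y Wa W :: "complex mat"
  assumes Wa: "Wa \<in> carrier_mat k N" and W: "W \<in> carrier_mat N k" and X: "X \<in> carrier_mat N N" and Y: "Y \<in> carrier_mat N N"
  shows "Wa * (X - Y) * W = Wa * X * W - Wa * Y * W"
proof -
  have "Wa * (X - Y) = Wa * X - Wa * Y" by (rule mult_minus_distrib_mat[OF Wa X Y])
  moreover have "(Wa * X - Wa * Y) * W = Wa * X * W - Wa * Y * W"
    by (rule minus_mult_distrib_mat[of _ k N]) (use Wa X Y W in auto)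
  ultimately show ?thesis by simp
qed

lemma dist2: fixes X Y Wa W :: "complex mat"
  assumes Wa: "Wa \<in> carrier_mat k N" and W: "W \<in> carrier_mat N k" and X: "X \<in> carrier_mat N N" and Y: "Y \<in> carrier_mat N N"
  shows "Wa * (c \<cdot>\<^sub>m (X - Y)) * W = c \<cdot>\<^sub>m (Wa * X * W - Wa * Y * W)"
proof -
  have XY: "X - Y \<in> carrier_mat N N" using Y by (rule minus_carrier_mat)
  have "Wa * (c \<cdot>\<^sub>m (X - Y)) = c \<cdot>\<^sub>m (Wa * (X - Y))" by (rule mult_smult_distrib[OF Wa XY])
  moreover have "(c \<cdot>\<^sub>m (Wa * (X - Y))) * W = c \<cdot>\<^sub>m (Wa * (X - Y) * W)"
    by (rule mult_smult_assoc_mat[of _ k N]) (use Wa XY W in auto)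
  ultimately show ?thesis using dist1[OF Wa W X Y] by simp
qed

lemma compress:
  fixes W Wa P1 P2 A :: "complex mat"
  assumes W: "W \<in> carrier_mat N k" and Wa: "Wa \<in> carrier_mat k N" and P1: "P1 \<in> carrier_mat N N"
    and WaW: "Wa * W = 1\<^sub>m k" and P2: "P2 = W * Wa" and A: "A = Wa * P1 * W"
    and H: "c \<cdot>\<^sub>m (P1 * P2 * P1 - P2 * P1 * P2) = P1 - P2"
  shows "c \<cdot>\<^sub>m (A * A - A) = A - 1\<^sub>m k"
proof -
  have d: "dim_row W = N" "dim_col W = k" "dim_row Wa = k" "dim_col Wa = N" "dim_row P1 = N" "dim_col P1 = N"
    using W Wa P1 by auto
  have WaWX: "Wa * (W * X) = X" if "dim_row X = k" for X
    using that d WaW by (metis assoc' left_mult_one_mat carrier_mat_triv)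
  have P2c: "P2 \<in> carrier_mat N N" using P2 W Wa by simp
  have 1: "Wa * (P1 * P2 * P1) * W = A * A" using d unfolding A P2 by (simp add: assoc')
  have 2: "Wa * (P2 * P1 * P2) * W = A" using d unfolding A P2 by (simp add: assoc' WaWX WaW)
  have 3: "Wa * P1 * W = A" using A by simp
  have 4: "Wa * P2 * W = 1\<^sub>m k" using d unfolding P2 by (simp add: assoc' WaWX WaW)
  have "Wa * (c \<cdot>\<^sub>m (P1 * P2 * P1 - P2 * P1 * P2)) * W = Wa * (P1 - P2) * W" using H by simp
  moreover have "Wa * (c \<cdot>\<^sub>m (P1 * P2 * P1 - P2 * P1 * P2)) * W = c \<cdot>\<^sub>m (Wa * (P1 * P2 * P1) * W - Wa * (P2 * P1 * P2) * W)"
    using W Wa P1 P2c by (intro dist2) auto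
  moreover have "Wa * (P1 - P2) * W = Wa * P1 * W - Wa * P2 * W"
    using W Wa P1 P2c by (intro dist1) auto
  ultimately show ?thesis using 1 2 3 4 by simp
qed

lemma trace_comm: fixes X Y :: "complex mat"
  assumes "X \<in> carrier_mat m l" "Y \<in> carrier_mat l m"
  shows "mtrace (X * Y) = mtrace (Y * X)"
proof -
  have "mtrace (X * Y) = (\<Sum>i<m. \<Sum>j<l. X $$ (i,j) * Y $$ (j,i))"
    unfolding mtrace_def using assms by (intro sum.cong refl) (auto simp: scalar_prod_def lessThan_atLeast0)
  also have "\<dots> = (\<Sum>j<l. \<Sum>i<m. Y $$ (j,i) * X $$ (i,j))"
    by (subst sum.swap) (simp add: mult.commute)
  also have "\<dots> = mtrace (Y * X)"
    unfolding mtrace_def using assms by (intro sum.cong refl) (auto simp: scalar_prod_def lessThan_atLeast0)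
  finally show ?thesis .
qed

lemma count_two: "(\<forall>i<K. f i = 1 \<or> f i = d) \<Longrightarrow> \<exists>m\<le>K. (\<Sum>i<K. f i) = of_nat (K - m) + of_nat m * (d::complex)"
proof (induction K)
  case 0 then show ?case by simp
next
  case (Suc K)
  then obtain m where m: "m \<le> K" "(\<Sum>i<K. f i) = of_nat (K - m) + of_nat m * d" by auto
  show ?case
  proof (cases "f K = 1")
    case True
    hence "(\<Sum>i<Suc K. f i) = of_nat (Suc K - m) + of_nat m * d" using m by (simp add: Suc_diff_le)
    thus ?thesis using m by (intro exI[of _ m]) auto
  next
    case False
    hence "f K = d" using Suc.prems by auto
    hence "(\<Sum>i<Suc K. f i) = of_nat (Suc K - Suc m) + of_nat (Suc m) * d" using m by (simp add: algebra_simps)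
    thus ?thesis using m by (intro exI[of _ "Suc m"]) auto
  qed
qed

lemma upper_diag_sq: assumes "B \<in> carrier_mat K K" "upper_triangular B" "i < K"
  shows "(B * B) $$ (i,i) = B $$ (i,i) * (B $$ (i,i) :: complex)"
proof -
  have "(B * B) $$ (i,i) = (\<Sum>j<K. B $$ (i,j) * B $$ (j,i))" using assms by (simp add: scalar_prod_def lessThan_atLeast0)
  also have "\<dots> = (\<Sum>j<K. if j = i then B $$ (i,i) * B $$ (i,i) else 0)"
  proof (intro sum.cong refl)
    fix j assume j: "j \<in> {..<K}"
    show "B $$ (i,j) * B $$ (j,i) = (if j = i then B $$ (i,i) * B $$ (i,i) else 0)"
    proof (cases "j < i")
      case True thus ?thesis using assms unfolding upper_triangular_def by auto
    next
      case False
      show ?thesis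
      proof (cases "j = i")
        case False
        hence "i < j" using \<open>\<not> j < i\<close> by auto
        thus ?thesis using assms j unfolding upper_triangular_def by auto
      qed simp
    qed
  qed
  also have "\<dots> = B $$ (i,i) * B $$ (i,i)" using assms by simp
  finally show ?thesis .
qed

lemma spectral_final:
  fixes A :: "complex mat" and c :: complex
  assumes A: "A \<in> carrier_mat (r*n) (r*n)" and c: "c \<noteq> 0"
    and E: "c \<cdot>\<^sub>m (A * A - A) = A - 1\<^sub>m (r*n)"
  shows "\<exists>k::nat. k > 0 \<and> G n r A k = 0"
proof -
  define K where "K = r*n"
  have A': "A \<in> carrier_mat K K" using A K_def by simp
  have E': "c \<cdot>\<^sub>m (A * A - A) = A - 1\<^sub>m K" using E K_def by simp
  obtain es where es: "char_poly A = (\<Prod>a\<leftarrow>es. [:- a, 1:])" using char_poly_factorized[OF A'] by auto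
  obtain B where B: "B \<in> carrier_mat K K" "upper_triangular B" "similar_mat A B"
    using schur_decomposition_exists[OF A' es] by auto
  obtain P Qm where PQ: "P \<in> carrier_mat K K" "Qm \<in> carrier_mat K K" "P * Qm = 1\<^sub>m K" "Qm * P = 1\<^sub>m K" "A = P * B * Qm"
    using similar_matD[OF B(3)] A' by (metis carrier_matD(1) insert_subset)
  have dA: "dim_row A = K" "dim_col A = K" using A' by auto
  have dB: "dim_row B = K" "dim_col B = K" "dim_row P = K" "dim_col P = K" "dim_row Qm = K" "dim_col Qm = K"
    using B PQ by auto
  have Bdef: "B = Qm * A * P"
  proof -
    have "Qm * A * P = (Qm * P) * B * (Qm * P)" using PQ(5) dB by (simp add: assoc')
    thus ?thesis using PQ dB by simp
  qed
  have BB: "B * B = Qm * (A * A) * P"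
    unfolding Bdef using dA dB PQ by (simp add: assoc')
  have EB: "c \<cdot>\<^sub>m (B * B - B) = B - 1\<^sub>m K"
  proof -
    have AA: "A * A \<in> carrier_mat K K" using A' by simp
    have "Qm * (c \<cdot>\<^sub>m (A * A - A)) * P = c \<cdot>\<^sub>m (Qm * (A * A) * P - Qm * A * P)"
      by (rule dist2[OF PQ(2) PQ(1) AA A'])
    moreover have "Qm * (A - 1\<^sub>m K) * P = Qm * A * P - Qm * 1\<^sub>m K * P"
      by (rule dist1[OF PQ(2) PQ(1) A']) simp
    moreover have "Qm * 1\<^sub>m K * P = 1\<^sub>m K" using PQ dB by simp
    moreover have "Qm * (c \<cdot>\<^sub>m (A * A - A)) * P = Qm * (A - 1\<^sub>m K) * P" using E' by simp
    ultimately show ?thesis unfolding BB[symmetric] Bdef[symmetric] by simp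
  qed
  have diag: "c * (B $$ (i,i) * B $$ (i,i) - B $$ (i,i)) = B $$ (i,i) - 1" if i: "i < K" for i
  proof -
    have "(c \<cdot>\<^sub>m (B * B - B)) $$ (i,i) = (B - 1\<^sub>m K) $$ (i,i)" using EB by simp
    thus ?thesis using i dB upper_diag_sq[OF B(1) B(2) i] by simp
  qed
  have two: "\<forall>i<K. B $$ (i,i) = 1 \<or> B $$ (i,i) = 1/c"
  proof (intro allI impI)
    fix i assume i: "i < K"
    have "(B $$ (i,i) - 1) * (c * B $$ (i,i) - 1) = 0" using diag[OF i] by (simp add: algebra_simps)
    hence "B $$ (i,i) - 1 = 0 \<or> c * B $$ (i,i) - 1 = 0" by (simp only: mult_eq_0_iff)
    thus "B $$ (i,i) = 1 \<or> B $$ (i,i) = 1/c" using c by (auto simp: eq_divide_eq mult.commute)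
  qed
  obtain m where m: "m \<le> K" "(\<Sum>i<K. B $$ (i,i)) = of_nat (K - m) + of_nat m * (1/c)"
    using count_two[OF two] by auto
  have trA: "mtrace A = (\<Sum>i<K. B $$ (i,i))"
  proof -
    have "mtrace A = mtrace (P * (B * Qm))" using PQ dB by (simp add: assoc')
    also have "\<dots> = mtrace ((B * Qm) * P)" using PQ B by (intro trace_comm[where l=K and m=K]) auto
    also have "\<dots> = mtrace B" using PQ dB by (simp add: assoc')
    finally show ?thesis unfolding mtrace_def using dB by simp
  qed
  have trAA: "c * mtrace (A * A) = c * mtrace A + mtrace A - of_nat K"
  proof -
    have "c * (A * A) $$ (i,i) = c * A $$ (i,i) + A $$ (i,i) - 1" if i: "i < K" for i
    proof -
      have "(c \<cdot>\<^sub>m (A * A - A)) $$ (i,i) = (A - 1\<^sub>m K) $$ (i,i)" using E' by simp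
      thus ?thesis using i dA by (simp add: algebra_simps)
    qed
    hence "(\<Sum>i<K. c * (A * A) $$ (i,i)) = (\<Sum>i<K. c * A $$ (i,i) + A $$ (i,i) - 1)" by simp
    thus ?thesis unfolding mtrace_def using dA by (simp add: sum_distrib_left sum.distrib sum_subtractf)
  qed
  define t where "t = mtrace A"
  have t: "t = of_nat (K - m) + of_nat m / c" using trA m t_def by simp
  have tt: "mtrace (A * A) = t + (t - of_nat K) / c" using trAA c t_def by (simp add: field_simps)
  have Kc: "of_nat K = (of_nat (K - m) :: complex) + of_nat m" using m by (simp add: of_nat_diff)
  have Gk: "G n r A k = of_nat m * (1 - 1/c)^2 * (of_nat m - of_nat k)" for k
    unfolding G_def K_def[symmetric] t_def[symmetric] tt t Kc using c
    by (simp add: field_simps power2_eq_square)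
  show ?thesis
  proof (cases "m = 0")
    case True thus ?thesis using Gk by (intro exI[of _ 1]) simp
  next
    case False thus ?thesis using Gk by (intro exI[of _ m]) simp
  qed
qed


theorem lemma7:
  fixes n r :: nat and V :: "nat \<Rightarrow> complex mat" and Q :: real
  assumes "n \<ge> 2" and "r \<ge> 1"
    and "\<forall>s<r. V s \<in> carrier_mat n n"
    and "\<forall>s<r. \<forall>m<r. mtrace (cmat_adj (V s) * V m) = (if s = m then 1 else 0)"
    and "Q > 0"
    and "cmat_adj (P_T n r V) = P_T n r V"
    and "P_T n r V * P_T n r V = P_T n r V"
    and "(let P1 = kron (P_T n r V) (1\<^sub>m n); P2 = kron (1\<^sub>m n) (P_T n r V) in
          (complex_of_real (Q^2)) \<cdot>\<^sub>m (P1 * P2 * P1 - P2 * P1 * P2) = P1 - P2)"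
  shows "\<exists>k::nat. k > 0 \<and> G n r (A_T n r V) k = 0"
proof -
  have n: "n > 0" using assms(1) by simp
  note V = assms(3) and ortho = assms(4)
  have H: "complex_of_real (Q^2) \<cdot>\<^sub>m (kron (P_T n r V) (1\<^sub>m n) * kron (1\<^sub>m n) (P_T n r V) * kron (P_T n r V) (1\<^sub>m n)
     - kron (1\<^sub>m n) (P_T n r V) * kron (P_T n r V) (1\<^sub>m n) * kron (1\<^sub>m n) (P_T n r V))
     = kron (P_T n r V) (1\<^sub>m n) - kron (1\<^sub>m n) (P_T n r V)"
    using assms(8) unfolding Let_def .
  have W: "Wm n r V \<in> carrier_mat (n*n*n) (r*n)" and Wa: "Wa n r V \<in> carrier_mat (r*n) (n*n*n)"
    unfolding carrier_mat_def by simp_all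
  have P1: "kron (P_T n r V) (1\<^sub>m n) \<in> carrier_mat (n*n*n) (n*n*n)" unfolding carrier_mat_def by simp
  have E: "complex_of_real (Q^2) \<cdot>\<^sub>m (A_T n r V * A_T n r V - A_T n r V) = A_T n r V - 1\<^sub>m (r*n)"
    by (rule compress[OF W Wa P1 F1[OF V ortho n] F2[OF V n, symmetric] F3[OF V n, symmetric] H])
  have A: "A_T n r V \<in> carrier_mat (r*n) (r*n)" unfolding carrier_mat_def by simp
  have c: "complex_of_real (Q^2) \<noteq> 0" using assms(5) by simp
  show ?thesis by (rule spectral_final[OF A c E])
qed

end
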